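(* For every $\varepsilon>0$ there exists a positive integer $L$ such that for all sufficiently large $N$, $$\sum_{k=L}^N P\big(R_{k,N}\ge N^{1-r}\big)<\varepsilon.$$
   Context: Fix $r\in(0,1)$. Multitype Yule process: at time $0$ a single individual of type $1$ is born; no deaths; each individual independently gives birth at rate $1$; a newborn has, independently, its parent's type with probability $1-r$ and otherwise a brand-new type. Individuals are numbered in order of birth (the initial one is the 1st); if the $k$-th individual born has a type different from its parent, that type is called type $k$. $T_N$ is the time the population reaches size $N$, and $R_{k,N}$ is the number of type-$k$ individuals at time $T_N$. *)

theory Defs
  imports "HOL-Probability.Probability"
begin

text \<open>Embedded jump chain of the multitype Yule process.  The state is the list of
types of the individuals in birth order (the i-th entry, 0-based, is the type of the
(i+1)-th individual).  In a Yule process with unit birth rates the parent of the next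
newborn is uniform among the current individuals; the newborn copies the parent's type
with probability 1-r and otherwise gets a new type, labelled by its birth index.\<close>

definition yule_step :: "real \<Rightarrow> nat list \<Rightarrow> nat list pmf" where
  "yule_step r ts =
     pmf_of_set {..<length ts} \<bind> (\<lambda>j.
     bernoulli_pmf (1 - r) \<bind> (\<lambda>b.
     return_pmf (ts @ [if b then ts ! j else Suc (length ts)])))"

text \<open>yule_pop r n: the list of types at the moment the population has size n+1.\<close>
fun yule_pop :: "real \<Rightarrow> nat \<Rightarrow> nat list pmf" where
  "yule_pop r 0 = return_pmf [1]"
| "yule_pop r (Suc n) = yule_pop r n \<bind> yule_step r"

definition yule_at :: "real \<Rightarrow> nat \<Rightarrow> nat list pmf" where
  "yule_at r N = yule_pop r (N - 1)"

definition R_count :: "nat \<Rightarrow> nat list \<Rightarrow> nat" where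
  "R_count k ts = count_list ts k"

end

theory Submission
  imports Defs
begin

lemma bern_powr:
  fixes a x :: real assumes "a \<ge> 1" "x \<ge> 0"
  shows "1 + a * x \<le> (1 + x) powr a"
proof -
  let ?g = "\<lambda>y::real. y powr a - a * y"
  have "?g 1 \<le> ?g (1 + x)"
  proof (rule DERIV_nonneg_imp_increasing_open[of 1 "1+x"])
    show "1 \<le> 1 + x" using assms by simp
    fix y :: real assume y: "1 < y" "y < 1 + x"
    show "\<exists>d. DERIV ?g y :> d \<and> d \<ge> 0"
    proof (intro exI conjI)
      show "DERIV ?g y :> a * y powr (a - 1) - a * 1"
        using y by (auto intro!: derivative_eq_intros)
      have "1 \<le> y powr (a - 1)" using y assms by (simp add: ge_one_powr_ge_zero)
      then show "0 \<le> a * y powr (a - 1) - a * 1" using assms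
        by (metis diff_ge_0_iff_ge mult.right_neutral mult_left_mono order_trans zero_le_one)
    qed
  next
    show "continuous_on {1..1+x} ?g"
      by (intro continuous_intros) auto
  qed
  then show ?thesis by (simp add: algebra_simps)
qed

definition FF :: "nat \<Rightarrow> nat \<Rightarrow> nat list \<Rightarrow> real" where
  "FF k p ts = pochhammer (real (count_list ts k)) p"

lemma poch_id: "(m::real) * (pochhammer (m+1) p - pochhammer m p) = real p * pochhammer m p"
proof -
  have "m * pochhammer (m+1) p = pochhammer m p * (m + real p)"
    using pochhammer_rec[of m p] pochhammer_Suc[of m p] by simp
  then show ?thesis by (simp add: algebra_simps)
qed

lemma card_count: "card {j. j < length ts \<and> ts ! j = k} = count_list ts k"
  by (simp add: count_list_eq_length_filter length_filter_conv_card eq_commute)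

lemma step_sum:
  assumes "ts \<noteq> []" "k \<le> length ts"
  shows "(\<Sum>j<length ts. FF k p (ts @ [ts ! j])) = FF k p ts * (real (length ts) + real p)"
proof -
  define n where "n = length ts"
  define m where "m = count_list ts k"
  have A: "{..<n} \<inter> {j. ts ! j = k} = {j. j < n \<and> ts ! j = k}" by auto
  have cA: "card ({..<n} \<inter> {j. ts ! j = k}) = m" using card_count[of ts k] A by (simp add: m_def n_def)
  have cB: "card ({..<n} \<inter> - {j. ts ! j = k}) = n - m"
  proof -
    have "{..<n} \<inter> - {j. ts ! j = k} = {..<n} - ({..<n} \<inter> {j. ts ! j = k})" by auto
    then show ?thesis using cA by (simp add: card_Diff_subset)
  qed
  have mn: "m \<le> n" unfolding m_def n_def by (rule count_le_length)
  have "(\<Sum>j<n. FF k p (ts @ [ts ! j])) =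
        (\<Sum>j<n. if ts ! j = k then pochhammer (real m + 1) p else pochhammer (real m) p)"
    by (intro sum.cong) (auto simp: FF_def m_def add.commute)
  also have "\<dots> = real m * pochhammer (real m + 1) p + real (n - m) * pochhammer (real m) p"
    by (subst sum.If_cases) (auto simp: cA cB)
  also have "\<dots> = pochhammer (real m) p * (real n + real p)"
    using poch_id[of "real m" p] mn by (simp add: of_nat_diff algebra_simps)
  finally show ?thesis by (simp add: n_def m_def FF_def)
qed

lemma set_step:
  assumes "ts \<noteq> []" "ts' \<in> set_pmf (yule_step r ts)"
  shows "\<exists>j<length ts. ts' = ts @ [ts ! j] \<or> ts' = ts @ [Suc (length ts)]"
proof -
  have "set_pmf (pmf_of_set {..<length ts}) = {..<length ts}"
    using assms(1) by (intro set_pmf_of_set) auto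
  then show ?thesis using assms by (auto simp: yule_step_def set_bind_pmf split: if_splits)
qed

definition Inv :: "nat list \<Rightarrow> bool" where
  "Inv ts \<longleftrightarrow> (\<forall>x\<in>set ts. x \<le> length ts) \<and> count_list ts (length ts) \<le> 1"

lemma set_pop: "ts \<in> set_pmf (yule_pop r n) \<Longrightarrow> length ts = Suc n \<and> Inv ts"
proof (induction n arbitrary: ts)
  case 0 then show ?case by (simp add: Inv_def)
next
  case (Suc n)
  then obtain us where us: "us \<in> set_pmf (yule_pop r n)" "ts \<in> set_pmf (yule_step r us)"
    by (auto simp: set_bind_pmf)
  with Suc.IH have len: "length us = Suc n" and I: "Inv us" by auto
  then have ne: "us \<noteq> []" by auto
  from set_step[OF ne us(2)] obtain j where j: "j < length us"
     "ts = us @ [us ! j] \<or> ts = us @ [Suc (length us)]" by blast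
  have nin: "Suc (length us) \<notin> set us" using I by (auto simp: Inv_def)
  have c0: "count_list us (Suc (length us)) = 0" using nin by simp
  have mem: "us ! j \<in> set us" using j by simp
  have "Inv ts"
    using j(2)
  proof
    assume ts: "ts = us @ [us ! j]"
    have "us ! j \<le> length us" using I mem by (auto simp: Inv_def)
    then show ?thesis using I ts c0 by (auto simp: Inv_def)
  next
    assume ts: "ts = us @ [Suc (length us)]"
    then show ?thesis using I c0 by (auto simp: Inv_def)
  qed
  then show ?case using j len by auto
qed

lemma FF_nonneg: "0 \<le> FF k p ts"
  by (simp add: FF_def pochhammer_of_nat)

lemma nn_step:
  assumes ne: "ts \<noteq> []" and kl: "k \<le> length ts" and r: "0 \<le> r" "r \<le> 1"
  shows "(\<integral>\<^sup>+x. ennreal (FF k p x) \<partial>yule_step r ts)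
         = ennreal (FF k p ts * (1 + real p * (1 - r) / real (length ts)))"
proof -
  define n where "n = length ts"
  have n0: "n > 0" using ne by (simp add: n_def)
  have new: "FF k p (ts @ [Suc n]) = FF k p ts" using kl by (simp add: FF_def n_def)
  have inner: "(\<integral>\<^sup>+b. ennreal (FF k p (ts @ [if b then ts ! j else Suc n])) \<partial>bernoulli_pmf (1 - r))
       = ennreal ((1 - r) * FF k p (ts @ [ts ! j]) + r * FF k p ts)" for j
    using r by (simp add: new FF_nonneg ennreal_mult'' ennreal_plus[symmetric] mult.commute)
  have "(\<integral>\<^sup>+x. ennreal (FF k p x) \<partial>yule_step r ts)
     = (\<integral>\<^sup>+j. ennreal ((1 - r) * FF k p (ts @ [ts ! j]) + r * FF k p ts) \<partial>pmf_of_set {..<n})"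
    unfolding yule_step_def n_def[symmetric] using inner by (simp add: nn_integral_return_pmf)
  also have "\<dots> = (\<Sum>j<n. ennreal ((1 - r) * FF k p (ts @ [ts ! j]) + r * FF k p ts)) / real n"
    using n0 by (subst nn_integral_pmf_of_set) (auto simp: ennreal_of_nat_eq_real_of_nat)
  also have "\<dots> = ennreal ((\<Sum>j<n. (1 - r) * FF k p (ts @ [ts ! j]) + r * FF k p ts) / real n)"
    using n0 r by (subst sum_ennreal) (auto intro!: divide_ennreal sum_nonneg add_nonneg_nonneg mult_nonneg_nonneg FF_nonneg)
  also have "(\<Sum>j<n. (1 - r) * FF k p (ts @ [ts ! j]) + r * FF k p ts)
      = (1 - r) * (FF k p ts * (real n + real p)) + real n * r * FF k p ts"
    using step_sum[OF ne kl, of p] by (simp add: sum.distrib sum_distrib_left[symmetric] n_def)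
  also have "((1 - r) * (FF k p ts * (real n + real p)) + real n * r * FF k p ts) / real n
      = FF k p ts * (1 + real p * (1 - r) / real n)"
    using n0 by (simp add: field_simps)
  finally show ?thesis by (simp add: n_def)
qed

lemma pow_le_poch: "(0::real) \<le> x \<Longrightarrow> x ^ p \<le> pochhammer x p"
proof (induction p)
  case 0 then show ?case by simp
next
  case (Suc p)
  have "x ^ Suc p = x ^ p * x" by simp
  also have "\<dots> \<le> pochhammer x p * (x + real p)"
    using Suc by (intro mult_mono) (auto intro: order_trans[OF zero_le_power])
  finally show ?case by (simp add: pochhammer_Suc)
qed

lemma base_bound:
  assumes "k \<ge> 1" "ts \<in> set_pmf (yule_pop r (k - 1))"
  shows "FF k p ts \<le> fact p"
proof -
  from set_pop[OF assms(2)] have "length ts = k" "Inv ts" using assms(1) by auto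
  then have c: "count_list ts k \<le> 1" by (simp add: Inv_def)
  show ?thesis
  proof (cases "count_list ts k = 0")
    case True
    then show ?thesis by (cases p) (auto simp: FF_def pochhammer_0_left)
  next
    case False
    with c have "count_list ts k = 1" by simp
    then show ?thesis by (simp add: FF_def pochhammer_fact)
  qed
qed

lemma moment_bound:
  assumes k: "k \<ge> 1" and r: "0 \<le> r" "r \<le> 1" and a: "real p * (1 - r) \<ge> 1"
  shows "n \<ge> k - 1 \<Longrightarrow> (\<integral>\<^sup>+x. ennreal (FF k p x) \<partial>yule_pop r n)
          \<le> ennreal (fact p * (real (Suc n) / real k) powr (real p * (1 - r)))"
proof (induction n rule: dec_induct)
  case base
  have "(\<integral>\<^sup>+x. ennreal (FF k p x) \<partial>yule_pop r (k - 1)) \<le> (\<integral>\<^sup>+x. ennreal (fact p) \<partial>yule_pop r (k - 1))"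
    by (intro nn_integral_mono_AE) (auto simp: AE_measure_pmf_iff intro!: base_bound k)
  also have "\<dots> = ennreal (fact p)" by (simp add: measure_pmf.emeasure_space_1)
  finally show ?case using k by simp
next
  case (step n)
  define a where "a = real p * (1 - r)"
  define c where "c = 1 + a / real (Suc n)"
  have c0: "c \<ge> 0" using a by (simp add: c_def a_def)
  have "(\<integral>\<^sup>+x. ennreal (FF k p x) \<partial>yule_pop r (Suc n))
      = (\<integral>\<^sup>+ts. (\<integral>\<^sup>+x. ennreal (FF k p x) \<partial>yule_step r ts) \<partial>yule_pop r n)" by simp
  also have "\<dots> = (\<integral>\<^sup>+ts. ennreal (FF k p ts) * ennreal c \<partial>yule_pop r n)"
  proof (intro nn_integral_cong_AE, unfold AE_measure_pmf_iff, intro ballI)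
    fix ts assume ts: "ts \<in> set_pmf (yule_pop r n)"
    from set_pop[OF ts] have len: "length ts = Suc n" by auto
    have kl: "k \<le> length ts" using len step.hyps k by simp
    have ne: "ts \<noteq> []" using len by auto
    from nn_step[OF ne kl r, of p] len have "(\<integral>\<^sup>+x. ennreal (FF k p x) \<partial>yule_step r ts) = ennreal (FF k p ts * c)"
      by (simp add: c_def a_def)
    then show "(\<integral>\<^sup>+x. ennreal (FF k p x) \<partial>yule_step r ts) = ennreal (FF k p ts) * ennreal c"
      using c0 FF_nonneg by (simp add: ennreal_mult)
  qed
  also have "\<dots> = (\<integral>\<^sup>+x. ennreal (FF k p x) \<partial>yule_pop r n) * ennreal c"
    by (simp add: nn_integral_multc)
  also have "\<dots> \<le> ennreal (fact p * (real (Suc n) / real k) powr a) * ennreal c"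
    using step.IH by (simp add: a_def mult_right_mono)
  also have "\<dots> = ennreal (fact p * ((real (Suc n) / real k) powr a * c))"
    using c0 by (simp add: ennreal_mult[symmetric])
  also have "\<dots> \<le> ennreal (fact p * (real (Suc (Suc n)) / real k) powr a)"
  proof -
    have "c \<le> (1 + 1 / real (Suc n)) powr a"
      using bern_powr[of a "1 / real (Suc n)"] a by (simp add: c_def a_def)
    also have "1 + 1 / real (Suc n) = real (Suc (Suc n)) / real (Suc n)" by (simp add: field_simps)
    finally have "(real (Suc n) / real k) powr a * c \<le>
        (real (Suc n) / real k) powr a * (real (Suc (Suc n)) / real (Suc n)) powr a"
      by (intro mult_left_mono) auto
    also have "\<dots> = (real (Suc (Suc n)) / real k) powr a"
      by (subst powr_mult[symmetric]) auto
    finally show ?thesis by (intro ennreal_leI mult_left_mono) auto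
  qed
  finally show ?case by (simp add: a_def)
qed

lemma prob_bound:
  assumes k: "1 \<le> k" "k \<le> N" and r: "0 < r" "r < 1" and a: "real p * (1 - r) \<ge> 1"
  shows "measure_pmf.prob (yule_at r N) {ts. real (R_count k ts) \<ge> real N powr (1 - r)}
         \<le> fact p / real k powr (real p * (1 - r))"
proof -
  define a where "a = real p * (1 - r)"
  define S where "S = {ts. real (R_count k ts) \<ge> real N powr (1 - r)}"
  have N0: "N \<ge> 1" using k by simp
  have Na: "real N powr a > 0" using N0 by simp
  have pt: "indicator S ts \<le> ennreal (FF k p ts) * ennreal (1 / real N powr a)" for ts
  proof (cases "ts \<in> S")
    case True
    define R where "R = real (count_list ts k)"
    have RN: "R \<ge> real N powr (1 - r)" using True by (simp add: S_def R_def R_count_def)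
    have "real N powr (1 - r) > 0" using N0 by simp
    then have Rpos: "R > 0" using RN by linarith
    have "real N powr a = (real N powr (1 - r)) powr real p"
      by (simp add: powr_powr a_def mult.commute)
    also have "\<dots> \<le> R powr real p" using RN by (intro powr_mono2) auto
    also have "\<dots> = R ^ p" using Rpos by (simp add: powr_realpow)
    also have "\<dots> \<le> FF k p ts" unfolding FF_def R_def by (rule pow_le_poch) simp
    finally have "1 \<le> FF k p ts * (1 / real N powr a)" using Na by (simp add: field_simps)
    then show ?thesis using True Na FF_nonneg
      by (simp add: ennreal_mult[symmetric] ennreal_1[symmetric] del: ennreal_1)
  qed simp
  have "emeasure (measure_pmf (yule_at r N)) S = (\<integral>\<^sup>+ts. indicator S ts \<partial>yule_at r N)" by simp
  also have "\<dots> \<le> (\<integral>\<^sup>+ts. ennreal (FF k p ts) * ennreal (1 / real N powr a) \<partial>yule_at r N)"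
    by (intro nn_integral_mono pt)
  also have "\<dots> = (\<integral>\<^sup>+ts. ennreal (FF k p ts) \<partial>yule_pop r (N - 1)) * ennreal (1 / real N powr a)"
    by (simp add: nn_integral_multc yule_at_def)
  also have "\<dots> \<le> ennreal (fact p * (real N / real k) powr a) * ennreal (1 / real N powr a)"
    using moment_bound[of k r p "N - 1"] k r a N0 by (intro mult_right_mono) (auto simp: a_def)
  also have "\<dots> = ennreal (fact p * (real N / real k) powr a * (1 / real N powr a))"
    using Na by (simp add: ennreal_mult[symmetric])
  also have "fact p * (real N / real k) powr a * (1 / real N powr a) = fact p / real k powr a"
    using Na k by (simp add: powr_divide field_simps)
  finally have "emeasure (measure_pmf (yule_at r N)) S \<le> ennreal (fact p / real k powr a)" .
  then show ?thesis unfolding S_def[symmetric] a_def[symmetric]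
    by (simp add: measure_pmf.emeasure_eq_measure ennreal_le_iff)
qed

lemma tele:
  assumes L: "2 \<le> L"
  shows "N \<ge> L - 1 \<Longrightarrow> (\<Sum>k=L..N. 1 / (real k)^2) \<le> 1 / real (L - 1) - 1 / real N"
proof (induction N rule: dec_induct)
  case base
  have "{L..L-1} = {}" using L by auto
  then show ?case by simp
next
  case (step n)
  have n1: "n \<ge> 1" using step.hyps L by simp
  have "{L..Suc n} = insert (Suc n) {L..n}" using step.hyps L by auto
  then have "(\<Sum>k=L..Suc n. 1 / (real k)^2) = 1 / (real (Suc n))^2 + (\<Sum>k=L..n. 1 / (real k)^2)"
    by simp
  also have "\<dots> \<le> 1 / (real (Suc n))^2 + (1 / real (L - 1) - 1 / real n)"
    using step.IH by simp
  also have "1 / (real (Suc n))^2 \<le> 1 / real n - 1 / real (Suc n)"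
  proof -
    have "1 / (real (Suc n))^2 \<le> 1 / (real n * real (Suc n))"
      using n1 by (intro divide_left_mono) (auto simp: power2_eq_square)
    also have "\<dots> = 1 / real n - 1 / real (Suc n)" using n1 by (simp add: field_simps)
    finally show ?thesis .
  qed
  finally show ?case by simp
qed

lemma sum_small:
  assumes L: "2 \<le> L"
  shows "(\<Sum>k=L..N. 1 / (real k)^2) \<le> 1 / real (L - 1)"
proof (cases "N \<ge> L - 1")
  case True
  then show ?thesis using tele[OF L True] by (smt (verit) of_nat_0_le_iff divide_nonneg_nonneg)
next
  case False
  then have "{L..N} = {}" by auto
  then show ?thesis by simp
qed

theorem lemma5p1:
  fixes r :: real
  assumes "0 < r" and "r < 1"
  shows "\<forall>\<epsilon>>0. \<exists>L::nat. L > 0 \<and>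
           (\<forall>\<^sub>F N in sequentially.
              (\<Sum>k=L..N. measure_pmf.prob (yule_at r N)
                   {ts. real (R_count k ts) \<ge> real N powr (1 - r)}) < \<epsilon>)"
proof (intro allI impI)
  fix \<epsilon> :: real assume e: "\<epsilon> > 0"
  define p where "p = nat \<lceil>2 / (1 - r)\<rceil>"
  define a where "a = real p * (1 - r)"
  have "real p \<ge> 2 / (1 - r)" unfolding p_def by linarith
  then have a2: "a \<ge> 2" using assms unfolding a_def by (simp add: field_simps)
  define L where "L = nat \<lceil>fact p / \<epsilon>\<rceil> + 2"
  have L2: "L \<ge> 2" by (simp add: L_def)
  have Lbig: "real (L - 1) > fact p / \<epsilon>" unfolding L_def by linarith
  have Lpos: "real (L - 1) > 0" using L2 by simp
  show "\<exists>L::nat. L > 0 \<and> (\<forall>\<^sub>F N in sequentially.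
              (\<Sum>k=L..N. measure_pmf.prob (yule_at r N)
                   {ts. real (R_count k ts) \<ge> real N powr (1 - r)}) < \<epsilon>)"
  proof (intro exI conjI always_eventually allI)
    show "L > 0" using L2 by simp
    fix N
    have "(\<Sum>k=L..N. measure_pmf.prob (yule_at r N)
                   {ts. real (R_count k ts) \<ge> real N powr (1 - r)})
          \<le> (\<Sum>k=L..N. fact p * (1 / (real k)^2))"
    proof (intro sum_mono)
      fix k assume k: "k \<in> {L..N}"
      then have k1: "k \<ge> 1" "k \<le> N" using L2 by auto
      have "measure_pmf.prob (yule_at r N) {ts. real (R_count k ts) \<ge> real N powr (1 - r)}
            \<le> fact p / real k powr a"
        using prob_bound[OF k1 assms, of p] a2 by (simp add: a_def)
      also have "\<dots> \<le> fact p * (1 / (real k)^2)"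
      proof -
        have "(real k)^2 = real k powr 2" using k1 by (simp add: powr_realpow)
        also have "\<dots> \<le> real k powr a" using k1 a2 by (intro powr_mono) auto
        finally have "(real k)^2 \<le> real k powr a" .
        moreover have "(real k)^2 > 0" using k1 by simp
        ultimately have "1 / real k powr a \<le> 1 / (real k)^2"
          by (intro divide_left_mono) auto
        then show ?thesis by (simp add: divide_inverse mult_left_mono)
      qed
      finally show "measure_pmf.prob (yule_at r N) {ts. real (R_count k ts) \<ge> real N powr (1 - r)}
            \<le> fact p * (1 / (real k)^2)" .
    qed
    also have "\<dots> = fact p * (\<Sum>k=L..N. 1 / (real k)^2)" by (simp add: sum_distrib_left)
    also have "\<dots> \<le> fact p * (1 / real (L - 1))"
      using sum_small[OF L2] by (intro mult_left_mono) auto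
    also have "\<dots> < \<epsilon>"
      using Lbig Lpos e by (simp add: field_simps)
    finally show "(\<Sum>k=L..N. measure_pmf.prob (yule_at r N)
                   {ts. real (R_count k ts) \<ge> real N powr (1 - r)}) < \<epsilon>" .
  qed
qed

end
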